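(* Let $P(z)=z^3+az^2+bz+c$ be a cubic polynomial with complex coefficients such that $0<1-|c|^2\le|a\bar c-\bar b|$. Then $P$ has a root $r$ with $|r|\ge1$. *)

theory Defs
  imports Complex_Main
begin

end

theory Submission
  imports Defs "HOL-Computational_Algebra.Fundamental_Theorem_Algebra"
begin

lemma cubic_root_ex:
  fixes a b c :: complex
  shows "\<exists>z. z^3 + a*z^2 + b*z + c = 0"
proof -
  have "\<not> constant (poly [:c,b,a,1:])"
    by (simp add: constant_degree)
  from fundamental_theorem_of_algebra[OF this] obtain z where "poly [:c,b,a,1:] z = 0" by blast
  then show ?thesis by (auto simp: algebra_simps power2_eq_square power3_eq_cube)
qed

lemma quad_vieta:
  fixes L B C :: complex
  assumes "L \<noteq> 0"
  shows "\<exists>u1 u2. u1 + u2 = - B / L \<and> u1 * u2 = C / L"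
proof -
  define s where "s = csqrt (B^2 - 4*L*C)"
  have s2: "s^2 = B^2 - 4*L*C" by (simp add: s_def)
  define u1 where "u1 = (-B + s)/(2*L)"
  define u2 where "u2 = (-B - s)/(2*L)"
  have "u1 + u2 = -B/L" using assms by (simp add: u1_def u2_def field_simps)
  moreover have "u1 * u2 = (B^2 - s^2)/(4*L^2)" using assms
    by (simp add: u1_def u2_def field_simps power2_eq_square)
  then have "u1 * u2 * (4*L^2) = B^2 - s^2" using assms by (simp add: field_simps)
  then have "(4*L) * (L * (u1 * u2)) = (4*L) * C" using s2 by algebra
  then have "L * (u1 * u2) = C" using assms by simp
  then have "u1 * u2 = C/L" using assms by (simp add: field_simps)
  ultimately show ?thesis by blast
qed

lemma norm_sq_id:
  fixes z w :: complex
  shows "(cmod (z - w))^2 - (cmod (1 - cnj w * z))^2 = ((cmod z)^2 - 1) * (1 - (cmod w)^2)"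
proof -
  have "complex_of_real ((cmod (z - w))^2 - (cmod (1 - cnj w * z))^2)
      = (z - w) * cnj (z - w) - (1 - cnj w * z) * cnj (1 - cnj w * z)"
    by (simp only: of_real_diff complex_norm_square)
  also have "\<dots> = (z * cnj z - 1) * (1 - w * cnj w)" by (simp add: algebra_simps)
  also have "\<dots> = complex_of_real (((cmod z)^2 - 1) * (1 - (cmod w)^2))"
    by (simp only: of_real_mult of_real_diff complex_norm_square of_real_1)
  finally show ?thesis using of_real_eq_iff by blast
qed

lemma factor_le:
  fixes z w :: complex
  assumes "cmod z \<ge> 1" "cmod w < 1"
  shows "cmod (1 - cnj w * z) \<le> cmod (z - w)"
proof -
  have "((cmod z)^2 - 1) * (1 - (cmod w)^2) \<ge> 0"
  proof (rule mult_nonneg_nonneg)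
    show "0 \<le> (cmod z)^2 - 1" using assms(1) by (simp add: one_le_power)
    have "(cmod w)^2 < 1" using assms(2) by (simp add: power_less_one_iff abs_less_iff)
    then show "0 \<le> 1 - (cmod w)^2" by simp
  qed
  then have "(cmod (1 - cnj w * z))^2 \<le> (cmod (z - w))^2" using norm_sq_id[of z w] by linarith
  then show ?thesis using power2_le_imp_le by fastforce
qed

theorem lemma5p5:
  fixes a b c :: complex
  assumes "0 < 1 - (cmod c)^2"
    and "1 - (cmod c)^2 \<le> cmod (a * cnj c - cnj b)"
  shows "\<exists>r::complex. r^3 + a * r^2 + b * r + c = 0 \<and> cmod r \<ge> 1"
proof (rule ccontr)
  assume H: "\<not> ?thesis"
  obtain z1 where z1: "z1^3 + a*z1^2 + b*z1 + c = 0" using cubic_root_ex by blast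
  obtain z2 z3 where v: "z2 + z3 = - (a + z1) / 1" "z2 * z3 = (b + a*z1 + z1^2) / 1"
    using quad_vieta[of 1 "a + z1" "b + a*z1 + z1^2"] by auto
  have ea: "a = -(z1+z2+z3)" using v by (simp add: algebra_simps)
  have eb: "b = z1*z2+z1*z3+z2*z3" using v ea by (simp add: algebra_simps power2_eq_square)
  have ec: "c = -z1*z2*z3"
  proof -
    have "c = -(z1^3 + a*z1^2 + b*z1)" using z1 by algebra
    then show ?thesis using ea eb by (simp add: algebra_simps power2_eq_square power3_eq_cube)
  qed
  have fac: "\<And>z. z^3 + a*z^2 + b*z + c = (z-z1)*(z-z2)*(z-z3)"
    unfolding ea eb ec by algebra
  have small: "cmod zi < 1" if "zi \<in> {z1,z2,z3}" for zi
  proof (rule ccontr)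
    assume "\<not> cmod zi < 1"
    moreover have "zi^3 + a*zi^2 + b*zi + c = 0" using that fac by auto
    ultimately show False using H by auto
  qed
  define L where "L = complex_of_real (1 - (cmod c)^2)"
  have L0: "L \<noteq> 0" unfolding L_def of_real_eq_0_iff using assms(1) by linarith
  have cl1: "cmod c < 1" using assms(1) by (simp add: power_less_one_iff abs_less_iff)
  define Bq where "Bq = a - c * cnj b"
  define Cq where "Cq = b - c * cnj a"
  have Lcc: "L = 1 - c * cnj c" unfolding L_def of_real_diff of_real_1 complex_norm_square by simp
  define Ps where "Ps = (\<lambda>z::complex. (1 - cnj z1 * z)*(1 - cnj z2 * z)*(1 - cnj z3 * z))"
  have Psid: "Ps z = cnj c * z^3 + cnj b * z^2 + cnj a * z + 1" for z
    unfolding Ps_def ea eb ec by (simp add: algebra_simps power2_eq_square power3_eq_cube)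
  have Qid: "z * (L*z^2 + Bq*z + Cq) = (z-z1)*(z-z2)*(z-z3) - c * Ps z" for z
    unfolding Psid fac[symmetric] Lcc Bq_def Cq_def
    by (simp add: algebra_simps power2_eq_square power3_eq_cube)
  have Qnz: "L*z^2 + Bq*z + Cq \<noteq> 0" if z: "cmod z \<ge> 1" for z
  proof
    assume Q0: "L*z^2 + Bq*z + Cq = 0"
    have "cmod (Ps z) \<le> cmod ((z-z1)*(z-z2)*(z-z3))"
      unfolding Ps_def norm_mult
      by (intro mult_mono factor_le z small) auto
    moreover have "(z-z1)*(z-z2)*(z-z3) \<noteq> 0"
      using small[of z1] small[of z2] small[of z3] z by force
    ultimately have "cmod (c * Ps z) < cmod ((z-z1)*(z-z2)*(z-z3))"
    proof -
      assume A: "cmod (Ps z) \<le> cmod ((z-z1)*(z-z2)*(z-z3))" and B: "(z-z1)*(z-z2)*(z-z3) \<noteq> 0"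
      have "cmod c * cmod (Ps z) \<le> cmod c * cmod ((z-z1)*(z-z2)*(z-z3))"
        using A by (simp add: mult_left_mono)
      also have "\<dots> < 1 * cmod ((z-z1)*(z-z2)*(z-z3))"
        using B cl1 by (intro mult_strict_right_mono) auto
      finally show ?thesis by (simp add: norm_mult)
    qed
    moreover have "(z-z1)*(z-z2)*(z-z3) = c * Ps z" using Qid[of z] Q0 by simp
    ultimately show False by simp
  qed
  obtain u1 u2 where u: "u1 + u2 = - Bq / L" "u1 * u2 = Cq / L"
    using quad_vieta[OF L0] by blast
  have qf: "L*z^2 + Bq*z + Cq = L*(z-u1)*(z-u2)" for z
  proof -
    have "Bq = - L*(u1+u2)" "Cq = L*(u1*u2)" using u L0 by (auto simp: field_simps)
    then show ?thesis by algebra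
  qed
  have u1s: "cmod u1 < 1" using Qnz[of u1] qf[of u1] by force
  have u2s: "cmod u2 < 1" using Qnz[of u2] qf[of u2] by force
  have "Cq = L * (u1*u2)" using u L0 by (auto simp: field_simps)
  then have "cmod Cq = (1 - (cmod c)^2) * (cmod u1 * cmod u2)"
  proof -
    have "cmod L = 1 - (cmod c)^2" unfolding L_def norm_of_real using assms(1) by simp
    then show ?thesis using \<open>Cq = L * (u1*u2)\<close> by (simp add: norm_mult)
  qed
  also have "\<dots> < (1 - (cmod c)^2) * 1"
  proof -
    have "cmod u1 * cmod u2 \<le> cmod u1" using u2s by (intro mult_left_le) auto
    then have "cmod u1 * cmod u2 < 1" using u1s by linarith
    then show ?thesis using assms(1) by (intro mult_strict_left_mono) auto
  qed
  finally have "cmod Cq < 1 - (cmod c)^2" by simp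
  moreover have "cmod Cq = cmod (a * cnj c - cnj b)"
  proof -
    have "cmod Cq = cmod (cnj Cq)" by simp
    also have "cnj Cq = -(a * cnj c - cnj b)" by (simp add: Cq_def algebra_simps)
    finally show ?thesis by (simp add: norm_minus_commute)
  qed
  ultimately show False using assms(2) by simp
qed

end
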